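(* A tubal matrix $\mathcal A\in\mathbb{C}_p^{I\times I}$ is unitary if and only if its small-t transpose $\mathcal A^t$ is unitary.
   Context: Fix an integer $p\ge1$ and an invertible linear map $L:\mathbb{C}^p\to\mathbb{C}^p$. A tubal scalar is an element of $\mathbb{C}_p:=\mathbb{C}^p$. The tensor-tensor product of tubal scalars is $\mathbf a*\mathbf b=L^{-1}(L(\mathbf a)\odot L(\mathbf b))$, where $\odot$ is the componentwise product. A tubal matrix $\mathcal A\in\mathbb{C}_p^{I\times J}$ is an $I\times J$ array of tubal scalars (identified with an array in $\mathbb{C}^{I\times J\times p}$); its $k$-th frontal slice $\mathcal A^{(k)}\in\mathbb{C}^{I\times J}$ has entries $\mathcal A(i,j)^{(k)}$, and $L(\mathcal A)$ is obtained by applying $L$ to every entry. For $\mathcal A\in\mathbb{C}_p^{I\times J}$, $\mathcal B\in\mathbb{C}_p^{J\times K}$, the product $\mathcal A*\mathcal B\in\mathbb{C}_p^{I\times K}$ is defined by $(\mathcal A*\mathcal B)(i,k)=\sum_j\mathcal A(i,j)*\mathcal B(j,k)$; equivalently $L(\mathcal A*\mathcal B)^{(k)}=L(\mathcal A)^{(k)}L(\mathcal B)^{(k)}$ for all $k$. The identity $\mathcal I_I\in\mathbb{C}_p^{I\times I}$ is the tubal matrix with $L(\mathcal I_I)^{(k)}$ equal to the $I\times I$ identity matrix for every $k$. The Hermitian transpose $\mathcal A^H\in\mathbb{C}_p^{J\times I}$ is defined by $L(\mathcal A^H)^{(k)}=(L(\mathcal A)^{(k)})^H$ for all $k$. $\mathcal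 A\in\mathbb{C}_p^{I\times I}$ is unitary if $\mathcal A*\mathcal A^H=\mathcal A^H*\mathcal A=\mathcal I_I$. The small-t transpose $\mathcal A^t\in\mathbb{C}_p^{J\times I}$ is defined by $\mathcal A^t(j,i)=\mathcal A(i,j)$ (each frontal slice is transposed, without conjugation). *)

theory Defs
  imports "HOL-Analysis.Analysis"
begin

text \<open>Tubal scalars: complex ^ 'p (the type 'p fixes p = CARD('p)).
  The transform L is a complex-linear bijection of complex ^ 'p.\<close>

type_synonym ('i, 'j, 'p) tmat = "'i \<Rightarrow> 'j \<Rightarrow> complex ^ 'p"

definition complex_linear :: "(complex ^ 'p \<Rightarrow> complex ^ 'p) \<Rightarrow> bool" where
  "complex_linear L \<longleftrightarrow> (\<forall>x y. L (x + y) = L x + L y) \<and> (\<forall>c x. L (c *s x) = c *s L x)"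

definition tscal_mult :: "(complex ^ 'p \<Rightarrow> complex ^ 'p) \<Rightarrow> complex ^ 'p \<Rightarrow> complex ^ 'p \<Rightarrow> complex ^ 'p" where
  "tscal_mult L a b = inv L (\<chi> k. L a $ k * L b $ k)"

definition tmat_mult :: "(complex ^ 'p \<Rightarrow> complex ^ 'p) \<Rightarrow> ('i::finite, 'j::finite, 'p) tmat \<Rightarrow> ('j, 'k, 'p) tmat \<Rightarrow> ('i, 'k, 'p) tmat" where
  "tmat_mult L A B = (\<lambda>i k. \<Sum>j\<in>UNIV. tscal_mult L (A i j) (B j k))"

definition tmat_id :: "(complex ^ 'p \<Rightarrow> complex ^ 'p) \<Rightarrow> ('i, 'i, 'p) tmat" where
  "tmat_id L = (\<lambda>i j. inv L (\<chi> k. if i = j then 1 else 0))"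

definition tmat_herm :: "(complex ^ 'p \<Rightarrow> complex ^ 'p) \<Rightarrow> ('i, 'j, 'p) tmat \<Rightarrow> ('j, 'i, 'p) tmat" where
  "tmat_herm L A = (\<lambda>j i. inv L (\<chi> k. cnj (L (A i j) $ k)))"

definition tmat_unitary :: "(complex ^ 'p \<Rightarrow> complex ^ 'p) \<Rightarrow> ('i::finite, 'i, 'p) tmat \<Rightarrow> bool" where
  "tmat_unitary L A \<longleftrightarrow> tmat_mult L A (tmat_herm L A) = tmat_id L \<and> tmat_mult L (tmat_herm L A) A = tmat_id L"

definition tmat_t :: "('i, 'j, 'p) tmat \<Rightarrow> ('j, 'i, 'p) tmat" where
  "tmat_t A = (\<lambda>j i. A i j)"

end

theory Submission
  imports Defs
begin

lemma L_inv: "bij L \<Longrightarrow> L (inv L x) = x"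
  by (meson bij_inv_eq_iff)

lemma L_sum:
  assumes "complex_linear L"
  shows "L (sum f S) = (\<Sum>x\<in>S. L (f x))"
proof (induction S rule: infinite_finite_induct)
  case (infinite A)
  have "L 0 = L ((0::complex) *s 0)" by simp
  also have "\<dots> = 0" using assms unfolding complex_linear_def by (metis scaleR_zero_left vector_smult_lzero)
  finally show ?case using infinite by simp
next
  case empty
  have "L 0 = L ((0::complex) *s 0)" by simp
  also have "\<dots> = 0" using assms unfolding complex_linear_def by (metis vector_smult_lzero)
  finally show ?case by simp
next
  case (insert x F)
  then show ?case using assms unfolding complex_linear_def by simp
qed

lemma mult_id_iff:
  fixes L :: "complex ^ 'p \<Rightarrow> complex ^ 'p"
    and A :: "('i::finite, 'j::finite, 'p) tmat" and B :: "('j, 'i, 'p) tmat"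
  assumes "complex_linear L" and "bij L"
  shows "tmat_mult L A B = tmat_id L \<longleftrightarrow>
     (\<forall>k i l. (\<Sum>j\<in>UNIV. L (A i j) $ k * L (B j l) $ k) = (if i = l then 1 else 0))"
proof -
  have inj: "inj L" using assms(2) bij_is_inj by blast
  have "tmat_mult L A B = tmat_id L \<longleftrightarrow> (\<forall>i l. L (tmat_mult L A B i l) = L (tmat_id L i l))"
    using inj by (auto simp: fun_eq_iff inj_eq)
  also have "\<dots> \<longleftrightarrow> (\<forall>i l k. L (tmat_mult L A B i l) $ k = L (tmat_id L i l) $ k)"
    by (auto simp: vec_eq_iff)
  also have "\<dots> \<longleftrightarrow> (\<forall>k i l. (\<Sum>j\<in>UNIV. L (A i j) $ k * L (B j l) $ k) = (if i = l then 1 else 0))"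
    by (auto simp: tmat_mult_def tmat_id_def L_sum[OF assms(1)] tscal_mult_def L_inv[OF assms(2)])
  finally show ?thesis .
qed

theorem proposition3p3:
  fixes L :: "complex ^ 'p \<Rightarrow> complex ^ 'p"
    and A :: "('i::finite, 'i, 'p) tmat"
  assumes "complex_linear L" and "bij L"
  shows "tmat_unitary L A \<longleftrightarrow> tmat_unitary L (tmat_t A)"
proof -
  define S where "S k i j = L (A i j) $ k" for k i j
  have H: "L (tmat_herm L B j i) $ k = cnj (L (B i j) $ k)" for B :: "('i, 'i, 'p) tmat" and i j k
    by (simp add: tmat_herm_def L_inv[OF assms(2)])
  have U: "tmat_unitary L B \<longleftrightarrow>
     (\<forall>k i l. (\<Sum>j\<in>UNIV. L (B i j) $ k * cnj (L (B l j) $ k)) = (if i = l then 1 else 0)) \<and>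
     (\<forall>k i l. (\<Sum>j\<in>UNIV. cnj (L (B j i) $ k) * L (B j l) $ k) = (if i = l then 1 else 0))"
    for B :: "('i, 'i, 'p) tmat"
    unfolding tmat_unitary_def mult_id_iff[OF assms] H ..
  have c: "(x::complex) = (if i = l then 1 else 0) \<longleftrightarrow> cnj x = (if i = l then 1 else 0)" for x and i l :: 'i
    by (metis complex_cnj_cnj complex_cnj_one complex_cnj_zero)
  have 1: "(\<Sum>j\<in>UNIV. L (A j i) $ k * cnj (L (A j l) $ k)) = (if i = l then 1 else 0)
     \<longleftrightarrow> (\<Sum>j\<in>UNIV. cnj (L (A j i) $ k) * L (A j l) $ k) = (if i = l then 1 else 0)" for k i l
    by (subst c) (simp add: mult.commute)
  have 2: "(\<Sum>j\<in>UNIV. cnj (L (A i j) $ k) * L (A l j) $ k) = (if i = l then 1 else 0)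
     \<longleftrightarrow> (\<Sum>j\<in>UNIV. L (A i j) $ k * cnj (L (A l j) $ k)) = (if i = l then 1 else 0)" for k i l
    by (subst c) (simp add: mult.commute)
  show ?thesis
    unfolding U unfolding tmat_t_def using 1 2 by blast
qed

end
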